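(* Let $n\geq 3$ be an integer and $p$ a prime with $\gcd(n,p(p-1))=1$. Let $F(x_1,\ldots,x_r)=a_1x_1^n+a_2x_2^n+\cdots+a_rx_r^n$ with $a_1,\ldots,a_r$ integers such that $r>\frac{n}{2}$, $a_1a_2\cdots a_r\neq 0$, and $\nu_p(a_i)\not\equiv\nu_p(a_j)\pmod n$ for all $1\leq i<j\leq r$. Then $R(F)$ is dense in $\mathbb{Q}_p$.
   Context: For an integral form $F$ in $r$ variables, $R(F)=\{F(\overline{x})/F(\overline{y}):\overline{x},\overline{y}\in\mathbb{Z}^r,\ F(\overline{y})\neq 0\}$, viewed as a subset of the field $\mathbb{Q}_p$ of $p$-adic numbers with its $p$-adic topology. $\nu_p$ denotes the $p$-adic valuation. *)

theory Defs
  imports Complex_Main "HOL-Computational_Algebra.Computational_Algebra" "HOL-Number_Theory.Number_Theory"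
begin

text \<open>p-adic valuation of a rational number (value 0 at 0 by convention; never used there).\<close>
definition padic_val :: "int \<Rightarrow> rat \<Rightarrow> int" where
  "padic_val p q = (case quotient_of q of (a, b) \<Rightarrow>
      int (multiplicity p a) - int (multiplicity p b))"

definition padic_abs :: "int \<Rightarrow> rat \<Rightarrow> real" where
  "padic_abs p q = (if q = 0 then 0 else real_of_int p powr (- real_of_int (padic_val p q)))"

text \<open>Diagonal form F(x) = a_0 x_0^n + ... + a_{r-1} x_{r-1}^n (indices shifted to 0..r-1).\<close>
definition diag_form :: "(nat \<Rightarrow> int) \<Rightarrow> nat \<Rightarrow> nat \<Rightarrow> (nat \<Rightarrow> int) \<Rightarrow> int" where
  "diag_form a r n x = (\<Sum>i<r. a i * x i ^ n)"

definition ratio_set :: "((nat \<Rightarrow> int) \<Rightarrow> int) \<Rightarrow> rat set" where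
  "ratio_set F = {of_int (F x) / of_int (F y) | x y. F y \<noteq> 0}"

text \<open>Density in Q_p of a set of rationals: since Q is dense in Q_p, S \<subseteq> Q is dense in Q_p
  iff every rational is a p-adic limit point-or-member of S, i.e. S is dense in (Q, |.|_p).\<close>
definition padic_dense :: "int \<Rightarrow> rat set \<Rightarrow> bool" where
  "padic_dense p S \<longleftrightarrow> (\<forall>q::rat. \<forall>\<epsilon>::real. \<epsilon> > 0 \<longrightarrow> (\<exists>s\<in>S. padic_abs p (s - q) < \<epsilon>))"

end

theory Submission
  imports Defs
begin


lemma pow_mod_cong:
  fixes T M :: int
  assumes "[T ^ m = 1] (mod M)"
  shows "[T ^ k = T ^ (k mod m)] (mod M)"
proof -
  have "T ^ k = (T ^ m) ^ (k div m) * T ^ (k mod m)"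
  proof -
    have "T ^ k = T ^ (m * (k div m) + k mod m)" by simp
    also have "\<dots> = (T ^ m) ^ (k div m) * T ^ (k mod m)" by (simp only: power_add power_mult)
    finally show ?thesis .
  qed
  moreover have "[(T ^ m) ^ (k div m) * T ^ (k mod m) = 1 ^ (k div m) * T ^ (k mod m)] (mod M)"
    by (intro cong_mult cong_pow assms cong_refl)
  ultimately show ?thesis by simp
qed

lemma coprime_totient:
  fixes p :: int and n N :: nat
  assumes "prime p" "gcd (int n) (p * (p - 1)) = 1"
  shows "coprime n (totient (nat (p ^ N)))"
proof (cases N)
  case 0 then show ?thesis by simp
next
  case (Suc k)
  have p0: "p > 1" using assms(1) prime_gt_1_int by blast
  have pn: "prime (nat p)" using assms(1) by (simp add: prime_nat_iff_prime)
  have "coprime (int n) (p * (p - 1))" using assms(2) by (simp add: coprime_iff_gcd_eq_1)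
  hence c1: "coprime (int n) p" and c2: "coprime (int n) (p - 1)" by auto
  have "coprime (int n) (p ^ k * (p - 1))" using c1 c2 by simp
  moreover have "int (totient (nat (p ^ N))) = p ^ k * (p - 1)"
  proof -
    have "nat (p ^ N) = nat p ^ N" using p0 by (intro nat_power_eq) simp
    hence "nat (p ^ N) = nat p ^ Suc k" using Suc by simp
    hence "totient (nat (p ^ N)) = nat p ^ k * (nat p - 1)"
      using totient_prime_power_Suc[OF pn] by simp
    thus ?thesis using p0 by (simp add: of_nat_diff)
  qed
  ultimately have "coprime (int n) (int (totient (nat (p ^ N))))" by simp
  thus ?thesis by (simp add: coprime_int_iff)
qed

lemma solve_pow:
  fixes p A B :: int and n N :: nat
  assumes "prime p" "\<not> p dvd A" "\<not> p dvd B" "gcd (int n) (p * (p - 1)) = 1"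
  shows "\<exists>W. p ^ N dvd A * W ^ n - B"
proof (cases N)
  case 0 then show ?thesis by simp
next
  case (Suc k)
  define M where "M = p ^ N"
  define m where "m = totient (nat M)"
  have p0: "p > 1" using assms(1) prime_gt_1_int by blast
  have M1: "M > 1" unfolding M_def using Suc p0 by (metis one_less_power zero_less_Suc)
  have "coprime p A" by (rule prime_imp_coprime[OF assms(1,2)])
  hence cA: "coprime A M" unfolding M_def by (simp add: coprime_commute)
  have "coprime p B" by (rule prime_imp_coprime[OF assms(1,3)])
  hence cB: "coprime B M" unfolding M_def by (simp add: coprime_commute)
  have m0: "m > 0" unfolding m_def using M1 by simp
  define T where "T = B * A ^ (m - 1)"
  have cT: "coprime T M" unfolding T_def using cA cB by simp
  have res: "residues M" using M1 by (simp add: residues_def)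
  have eA: "[A ^ m = 1] (mod M)" unfolding m_def using residues.euler_theorem[OF res] cA by auto
  have eT: "[T ^ m = 1] (mod M)" unfolding m_def using residues.euler_theorem[OF res] cT by auto
  have "coprime n m" unfolding m_def M_def using coprime_totient[OF assms(1,4)] by blast
  then obtain n' where n': "[n * n' = Suc 0] (mod m)" using cong_solve_coprime_nat by blast
  have nm: "(n * n') mod m = 1 mod m" using n' by (simp add: cong_def)
  define W where "W = T ^ n'"
  have "[W ^ n = T ^ ((n * n') mod m)] (mod M)"
    unfolding W_def using pow_mod_cong[OF eT, of "n * n'"]
    by (simp add: power_mult[symmetric] mult.commute)
  also have "T ^ ((n * n') mod m) = T ^ (1 mod m)" using nm by simp
  also have "[T ^ (1 mod m) = T ^ 1] (mod M)"
    using pow_mod_cong[OF eT, of 1] by (rule cong_sym)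
  finally have WT: "[W ^ n = T] (mod M)" by simp
  have "[A * W ^ n = A * T] (mod M)" by (intro cong_mult cong_refl WT)
  also have "A * T = B * A ^ m"
  proof -
    have "A ^ m = A * A ^ (m - 1)" using m0 by (cases m) auto
    thus ?thesis by (simp add: T_def)
  qed
  also have "[B * A ^ m = B * 1] (mod M)" by (intro cong_mult cong_refl eA)
  finally have "[A * W ^ n = B] (mod M)" by simp
  thus ?thesis unfolding M_def by (auto simp: cong_iff_dvd_diff)
qed

lemma padic_val_of_int:
  "padic_val p (of_int z) = int (multiplicity p z)"
  by (simp add: padic_val_def quotient_of_int)

lemma padic_val_div:
  fixes p a b :: int
  assumes "prime p" "a \<noteq> 0" "b \<noteq> 0"
  shows "padic_val p (of_int a / of_int b) = int (multiplicity p a) - int (multiplicity p b)"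
proof -
  obtain c d where qd: "quotient_of (of_int a / of_int b) = (c, d)" by (cases "quotient_of (of_int a / of_int b)") auto
  have d0: "d > 0" using quotient_of_denom_pos[OF qd] .
  have eq: "(of_int a / of_int b :: rat) = of_int c / of_int d" using quotient_of_div[OF qd] .
  have c0: "c \<noteq> 0" using eq assms d0 by auto
  have "(of_int (a * d) :: rat) = of_int (c * b)" using eq assms d0
    by (simp add: field_simps)
  hence ad: "a * d = c * b" by (simp only: of_int_eq_iff)
  have pe: "prime_elem p" using assms(1) by (rule prime_imp_prime_elem)
  have "multiplicity p a + multiplicity p d = multiplicity p c + multiplicity p b"
    using prime_elem_multiplicity_mult_distrib[OF pe, of a d]
          prime_elem_multiplicity_mult_distrib[OF pe, of c b] ad assms c0 d0 by simp
  thus ?thesis unfolding padic_val_def qd by simp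
qed

lemma padic_abs_bound:
  fixes p Num Den :: int
  assumes "prime p" "Den \<noteq> 0" "p ^ N dvd Num"
  shows "padic_abs p (of_int Num / of_int Den) \<le> real_of_int p powr (real (multiplicity p Den) - real N)"
proof (cases "Num = 0")
  case True then show ?thesis by (simp add: padic_abs_def)
next
  case False
  have p1: "real_of_int p \<ge> 1" using prime_gt_1_int[OF assms(1)] by simp
  have NM: "N \<le> multiplicity p Num"
    by (rule multiplicity_geI) (use assms False in \<open>auto simp: not_prime_unit\<close>)
  have "padic_abs p (of_int Num / of_int Den) =
        real_of_int p powr (- real_of_int (int (multiplicity p Num) - int (multiplicity p Den)))"
    using False assms by (simp add: padic_abs_def padic_val_div)
  also have "\<dots> \<le> real_of_int p powr (real (multiplicity p Den) - real N)"
    by (rule powr_mono) (use NM p1 in auto)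
  finally show ?thesis .
qed

lemma small_powr:
  fixes x \<epsilon> :: real
  assumes "x > 1" "\<epsilon> > 0"
  shows "\<exists>N::nat. x powr (real M - real N) < \<epsilon>"
proof -
  obtain N where N: "x powr real M / \<epsilon> < x ^ N" using real_arch_pow[OF assms(1)] by blast
  have "x powr (real M - real N) = x powr real M / x ^ N"
    using assms by (simp add: powr_diff powr_realpow)
  also have "\<dots> < \<epsilon>" using N assms by (simp add: field_simps)
  finally show ?thesis by blast
qed

lemma diag_single:
  assumes "i < r" "n > 0"
  shows "diag_form a r n (\<lambda>l. if l = i then X else 0) = a i * X ^ n"
proof -
  have "(\<lambda>l. a l * (if l = i then X else 0) ^ n) = (\<lambda>l. if l = i then a i * X ^ n else 0)"
    using assms by (auto simp: fun_eq_iff)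
  hence "diag_form a r n (\<lambda>l. if l = i then X else 0) = (\<Sum>l<r. if l = i then a i * X ^ n else 0)"
    unfolding diag_form_def by (rule arg_cong[where f="\<lambda>h. sum h {..<r}"])
  thus ?thesis using assms by simp
qed

lemma pigeon:
  fixes f g :: "nat \<Rightarrow> int" and n r :: nat
  assumes "inj_on f {..<r}" "inj_on g {..<r}" "f ` {..<r} \<subseteq> {0..<int n}"
    "g ` {..<r} \<subseteq> {0..<int n}" "n < 2 * r"
  shows "\<exists>i<r. \<exists>j<r. f i = g j"
proof (rule ccontr)
  assume H: "\<not> ?thesis"
  hence dis: "f ` {..<r} \<inter> g ` {..<r} = {}" by auto
  have "card (f ` {..<r} \<union> g ` {..<r}) = 2 * r"
    using card_Un_disjoint[OF _ _ dis] card_image[OF assms(1)] card_image[OF assms(2)] by simp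
  moreover have "card (f ` {..<r} \<union> g ` {..<r}) \<le> card {0..<int n}"
    by (rule card_mono) (use assms in auto)
  ultimately show False using assms(5) by simp
qed


lemma core:
  fixes p A B :: int and n :: nat
  assumes "prime p" "A \<noteq> 0" "B \<noteq> 0"
    "[int (multiplicity p A) = int (multiplicity p B)] (mod int n)"
    "gcd (int n) (p * (p - 1)) = 1"
  shows "\<exists>K. \<forall>N. \<exists>X. p ^ N dvd A * X ^ n - B * (p ^ K) ^ n"
proof -
  have pnu: "\<not> is_unit p" using assms(1) not_prime_unit by blast
  obtain A' where A': "A = p ^ multiplicity p A * A'" "\<not> p dvd A'"
    using multiplicity_decompose'[OF assms(2) pnu] by blast
  obtain B' where B': "B = p ^ multiplicity p B * B'" "\<not> p dvd B'"
    using multiplicity_decompose'[OF assms(3) pnu] by blast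
  define \<alpha> where "\<alpha> = multiplicity p A"
  define \<beta> where "\<beta> = multiplicity p B"
  have "[\<alpha> = \<beta>] (mod n)" using assms(4) unfolding \<alpha>_def \<beta>_def by (simp add: cong_int_iff)
  then obtain K1 K2 where KK: "\<beta> + K1 * n = \<alpha> + K2 * n" using cong_iff_lin_nat by blast
  show ?thesis
  proof (rule exI[of _ K1], intro allI)
    fix N
    obtain W where W: "p ^ N dvd A' * W ^ n - B'" using solve_pow[OF assms(1) A'(2) B'(2) assms(5)] by blast
    have e1: "A * (p ^ K2 * W) ^ n = p ^ (\<alpha> + K2 * n) * (A' * W ^ n)"
    proof -
      have "(p ^ K2 * W) ^ n = p ^ (K2 * n) * W ^ n" by (simp add: power_mult_distrib power_mult)
      thus ?thesis using A'(1) unfolding \<alpha>_def by (simp add: power_add mult_ac)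
    qed
    have e2: "B * (p ^ K1) ^ n = p ^ (\<alpha> + K2 * n) * B'"
    proof -
      have "B * (p ^ K1) ^ n = p ^ (\<beta> + K1 * n) * B'" using B'(1) unfolding \<beta>_def
        by (simp add: power_add power_mult mult_ac)
      thus ?thesis using KK by simp
    qed
    have "A * (p ^ K2 * W) ^ n - B * (p ^ K1) ^ n = p ^ (\<alpha> + K2 * n) * (A' * W ^ n - B')"
      using e1 e2 by (simp add: right_diff_distrib)
    hence "p ^ N dvd A * (p ^ K2 * W) ^ n - B * (p ^ K1) ^ n" using W by simp
    thus "\<exists>X. p ^ N dvd A * X ^ n - B * (p ^ K1) ^ n" by blast
  qed
qed

theorem theorem1p3:
  fixes n r :: nat and p :: int and a :: "nat \<Rightarrow> int"
  assumes "n \<ge> 3"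
    and "prime p"
    and "gcd (int n) (p * (p - 1)) = 1"
    and "real r > real n / 2"
    and "(\<Prod>i<r. a i) \<noteq> 0"
    and "\<forall>i j. i < j \<and> j < r \<longrightarrow>
           \<not> [padic_val p (of_int (a i)) = padic_val p (of_int (a j))] (mod (int n))"
  shows "padic_dense p (ratio_set (diag_form a r n))"
proof -
  have n0: "n > 0" using assms(1) by simp
  have nr: "n < 2 * r" using assms(4) by linarith
  have r0: "r > 0" using nr by simp
  have anz: "a i \<noteq> 0" if "i < r" for i using assms(5) that by (simp add: prod_zero_iff)
  have p1: "real_of_int p > 1" using prime_gt_1_int[OF assms(2)] by simp
  have pnz: "p \<noteq> 0" using assms(2) by auto
  have mem: "of_int (a i * X ^ n) / of_int (a j * Y ^ n) \<in> ratio_set (diag_form a r n)"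
    if "i < r" "j < r" "a j * Y ^ n \<noteq> 0" for i j X Y
  proof -
    have "diag_form a r n (\<lambda>l. if l = i then X else 0) = a i * X ^ n"
      using diag_single[OF that(1) n0] .
    moreover have "diag_form a r n (\<lambda>l. if l = j then Y else 0) = a j * Y ^ n"
      using diag_single[OF that(2) n0] .
    ultimately show ?thesis unfolding ratio_set_def using that(3) by (smt (verit) mem_Collect_eq)
  qed
  show ?thesis unfolding padic_dense_def
  proof (intro allI impI)
    fix q :: rat and \<epsilon> :: real
    assume eps: "\<epsilon> > 0"
    obtain c d where qd: "quotient_of q = (c, d)" by (cases "quotient_of q") auto
    have d0: "d > 0" using quotient_of_denom_pos[OF qd] .
    have qeq: "q = of_int c / of_int d" using quotient_of_div[OF qd] .
    show "\<exists>s\<in>ratio_set (diag_form a r n). padic_abs p (s - q) < \<epsilon>"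
    proof (cases "c = 0")
      case True
      hence q0: "q = 0" using qeq by simp
      obtain N where N: "real_of_int p powr (real (multiplicity p (a 0)) - real N) < \<epsilon>"
        using small_powr[OF p1 eps] by blast
      have s: "of_int (a 0 * (p ^ N) ^ n) / of_int (a 0 * 1 ^ n) \<in> ratio_set (diag_form a r n)"
        by (rule mem[OF r0 r0]) (use anz[OF r0] in simp)
      have dv: "p ^ N dvd a 0 * (p ^ N) ^ n" using n0 by (simp add: dvd_power)
      have bnd: "padic_abs p (of_int (a 0 * (p ^ N) ^ n) / of_int (a 0 * 1 ^ n) - q)
          \<le> real_of_int p powr (real (multiplicity p (a 0)) - real N)"
        using padic_abs_bound[OF assms(2) _ dv, of "a 0"] anz[OF r0] q0 by simp
      show ?thesis by (rule bexI[OF _ s]) (use N bnd in linarith)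
    next
      case False
      have v: "padic_val p q = int (multiplicity p c) - int (multiplicity p d)"
        unfolding padic_val_def qd by simp
      define \<alpha> where "\<alpha> i = padic_val p (of_int (a i))" for i
      define v where "v = padic_val p q"
      define f where "f i = \<alpha> i mod int n" for i
      define g where "g i = (\<alpha> i + v) mod int n" for i
      have finj: "inj_on f {..<r}"
      proof (rule inj_onI)
        fix i j assume ij: "i \<in> {..<r}" "j \<in> {..<r}" "f i = f j"
        hence cg: "[\<alpha> i = \<alpha> j] (mod int n)" unfolding f_def by (simp add: cong_def)
        show "i = j"
        proof (rule ccontr)
          assume "i \<noteq> j"
          hence "i < j \<or> j < i" by auto
          thus False
          proof
            assume "i < j" thus False using assms(6) ij cg unfolding \<alpha>_def by auto
          next
            assume "j < i" thus False using assms(6) ij cong_sym[OF cg] unfolding \<alpha>_def by auto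
          qed
        qed
      qed
      have ginj: "inj_on g {..<r}"
      proof (rule inj_onI)
        fix i j assume ij: "i \<in> {..<r}" "j \<in> {..<r}" "g i = g j"
        hence "[\<alpha> i + v = \<alpha> j + v] (mod int n)" unfolding g_def by (simp add: cong_def)
        hence "f i = f j" unfolding f_def by (simp add: cong_def[symmetric] cong_add_rcancel)
        thus "i = j" using finj ij by (simp add: inj_on_def)
      qed
      have fr: "f ` {..<r} \<subseteq> {0..<int n}" unfolding f_def using n0 by auto
      have gr: "g ` {..<r} \<subseteq> {0..<int n}" unfolding g_def using n0 by auto
      obtain i j where ij: "i < r" "j < r" "f i = g j" using pigeon[OF finj ginj fr gr nr] by blast
      hence cij: "[\<alpha> i = \<alpha> j + v] (mod int n)" unfolding f_def g_def by (simp add: cong_def)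
      define A where "A = a i * d"
      define B where "B = a j * c"
      have A0: "A \<noteq> 0" unfolding A_def using anz[OF ij(1)] d0 by simp
      have B0: "B \<noteq> 0" unfolding B_def using anz[OF ij(2)] False by simp
      have pe: "prime_elem p" using assms(2) by (rule prime_imp_prime_elem)
      have mA: "int (multiplicity p A) = \<alpha> i + int (multiplicity p d)"
        unfolding A_def \<alpha>_def padic_val_of_int
        using prime_elem_multiplicity_mult_distrib[OF pe anz[OF ij(1)], of d] d0 by simp
      have mB: "int (multiplicity p B) = \<alpha> j + int (multiplicity p c)"
        unfolding B_def \<alpha>_def padic_val_of_int
        using prime_elem_multiplicity_mult_distrib[OF pe anz[OF ij(2)], of c] False by simp
      have "[\<alpha> i + int (multiplicity p d) = \<alpha> j + v + int (multiplicity p d)] (mod int n)"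
        by (intro cong_add cij cong_refl)
      also have "\<alpha> j + v + int (multiplicity p d) = \<alpha> j + int (multiplicity p c)"
        unfolding v_def v by simp
      finally have cAB: "[int (multiplicity p A) = int (multiplicity p B)] (mod int n)"
        using mA mB by simp
      obtain K where K: "\<And>N. \<exists>X. p ^ N dvd A * X ^ n - B * (p ^ K) ^ n"
        using core[OF assms(2) A0 B0 cAB assms(3)] by blast
      define Den where "Den = a j * (p ^ K) ^ n * d"
      have Den0: "Den \<noteq> 0" unfolding Den_def using anz[OF ij(2)] d0 pnz by simp
      obtain N where N: "real_of_int p powr (real (multiplicity p Den) - real N) < \<epsilon>"
        using small_powr[OF p1 eps] by blast
      obtain X where X: "p ^ N dvd A * X ^ n - B * (p ^ K) ^ n" using K by blast
      have Yn: "a j * (p ^ K) ^ n \<noteq> 0" using anz[OF ij(2)] pnz by simp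
      have s: "of_int (a i * X ^ n) / of_int (a j * (p ^ K) ^ n) \<in> ratio_set (diag_form a r n)"
        using mem[OF ij(1,2) Yn] .
      have "(of_int (a i * X ^ n) / of_int (a j * (p ^ K) ^ n) :: rat) - q
            = of_int (A * X ^ n - B * (p ^ K) ^ n) / of_int Den"
      proof -
        have "(of_int (a i * X ^ n) / of_int (a j * (p ^ K) ^ n) :: rat) - of_int c / of_int d
          = (of_int (a i * X ^ n) * of_int d - of_int c * of_int (a j * (p ^ K) ^ n))
             / (of_int (a j * (p ^ K) ^ n) * of_int d)"
          by (rule diff_frac_eq) (use Yn d0 in simp_all)
        also have "\<dots> = of_int (A * X ^ n - B * (p ^ K) ^ n) / of_int Den"
        proof -
          have "A * X ^ n - B * (p ^ K) ^ n = a i * X ^ n * d - c * (a j * (p ^ K) ^ n)"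
            unfolding A_def B_def by (simp add: algebra_simps)
          thus ?thesis unfolding Den_def by (simp only: of_int_mult of_int_diff)
        qed
        finally show ?thesis unfolding qeq .
      qed
      hence bnd: "padic_abs p (of_int (a i * X ^ n) / of_int (a j * (p ^ K) ^ n) - q)
          \<le> real_of_int p powr (real (multiplicity p Den) - real N)"
        using padic_abs_bound[OF assms(2) Den0 X] by simp
      show ?thesis by (rule bexI[OF _ s]) (use N bnd in linarith)
    qed
  qed
qed

end
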